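(* Let $T$ be a $C_{p^rq^s}$-transfer system. Then the connected component of $(r,s)$ in $T$ is a rectangle, i.e., equals $\{(i,j): a\le i\le r,\ b\le j\le s\}$ for some vertex $(a,b)$.
   Context: $p,q$ are distinct primes and $r,s\ge 0$ integers. The subgroups of $C_{p^rq^s}$ are identified with grid points $(i,j)$, $0\le i\le r$, $0\le j\le s$, where $(i,j)$ stands for $C_{p^iq^j}$. A $C_{p^rq^s}$-transfer system is a partial order $\to$ on these vertices such that: $(i_1,j_1)\to(i_2,j_2)$ implies $i_1\le i_2$, $j_1\le j_2$; it is reflexive and transitive; and $(i_1,j_1)\to(i_2,j_2)$ implies $(\min\{i_1,a\},\min\{j_1,b\})\to(\min\{i_2,a\},\min\{j_2,b\})$ for every vertex $(a,b)$. Connected components are those of the underlying undirected graph. *)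

theory Defs
  imports "HOL-Computational_Algebra.Primes"
begin

text \<open>Subgroups of the cyclic group of order p^r q^s are identified with grid points
  (i,j), 0 <= i <= r, 0 <= j <= s.\<close>

definition grid :: "nat \<Rightarrow> nat \<Rightarrow> (nat \<times> nat) set" where
  "grid r s = {(i, j). i \<le> r \<and> j \<le> s}"

text \<open>A transfer system: a partial order on the grid vertices, refining the product
  order, closed under restriction (componentwise min with any vertex).\<close>

definition transfer_system :: "nat \<Rightarrow> nat \<Rightarrow> (nat \<times> nat \<Rightarrow> nat \<times> nat \<Rightarrow> bool) \<Rightarrow> bool" where
  "transfer_system r s T \<longleftrightarrow>
     (\<forall>x y. T x y \<longrightarrow> x \<in> grid r s \<and> y \<in> grid r s) \<and>
     (\<forall>x\<in>grid r s. T x x) \<and>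
     (\<forall>x y z. T x y \<longrightarrow> T y z \<longrightarrow> T x z) \<and>
     (\<forall>x y. T x y \<longrightarrow> T y x \<longrightarrow> x = y) \<and>
     (\<forall>i1 j1 i2 j2. T (i1, j1) (i2, j2) \<longrightarrow> i1 \<le> i2 \<and> j1 \<le> j2) \<and>
     (\<forall>i1 j1 i2 j2 a b. T (i1, j1) (i2, j2) \<longrightarrow> (a, b) \<in> grid r s \<longrightarrow>
        T (min i1 a, min j1 b) (min i2 a, min j2 b))"

definition component :: "(nat \<times> nat \<Rightarrow> nat \<times> nat \<Rightarrow> bool) \<Rightarrow> nat \<times> nat \<Rightarrow> (nat \<times> nat) set" where
  "component T v = {w. (\<lambda>x y. T x y \<or> T y x)\<^sup>*\<^sup>* v w}"

end

theory Submission
  imports Defs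
begin

definition mn :: "nat \<times> nat \<Rightarrow> nat \<times> nat \<Rightarrow> nat \<times> nat" where
  "mn v x = (min (fst x) (fst v), min (snd x) (snd v))"

lemma restr_path:
  assumes ts: "transfer_system r s T" and v: "v \<in> grid r s"
    and p: "(\<lambda>x y. T x y \<or> T y x)\<^sup>*\<^sup>* x y"
  shows "(\<lambda>x y. T x y \<or> T y x)\<^sup>*\<^sup>* (mn v x) (mn v y)"
  using p
proof (induction rule: rtranclp_induct)
  case base then show ?case by simp
next
  case (step y z)
  let ?R = "\<lambda>x y. T x y \<or> T y x"
  have R: "\<And>i1 j1 i2 j2. T (i1, j1) (i2, j2) \<Longrightarrow>
        T (min i1 (fst v), min j1 (snd v)) (min i2 (fst v), min j2 (snd v))"
    using ts v unfolding transfer_system_def by (metis prod.collapse)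
  have "T (mn v y) (mn v z) \<or> T (mn v z) (mn v y)"
    using step(2) R[of "fst y" "snd y" "fst z" "snd z"] R[of "fst z" "snd z" "fst y" "snd y"]
    unfolding mn_def by auto
  then show ?case using step(3) rtranclp.rtrancl_into_rtrancl[of ?R "mn v x" "mn v y" "mn v z"] by blast
qed

lemma path_grid:
  assumes ts: "transfer_system r s T"
    and p: "(\<lambda>x y. T x y \<or> T y x)\<^sup>*\<^sup>* (r,s) y"
  shows "y \<in> grid r s"
  using p
proof (induction rule: rtranclp_induct)
  case base then show ?case by (simp add: grid_def)
next
  case (step y z)
  then show ?case using ts unfolding transfer_system_def by blast
qed

theorem mainTheorem10:
  fixes p q r s :: nat
    and T :: "nat \<times> nat \<Rightarrow> nat \<times> nat \<Rightarrow> bool"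
  assumes "prime p" and "prime q" and "p \<noteq> q"
    and "transfer_system r s T"
  shows "\<exists>a b. a \<le> r \<and> b \<le> s \<and>
           component T (r, s) = {(i, j). a \<le> i \<and> i \<le> r \<and> b \<le> j \<and> j \<le> s}"
proof -
  let ?R = "\<lambda>x y. T x y \<or> T y x"
  define C where "C = component T (r, s)"
  have Cg: "C \<subseteq> grid r s" using path_grid[OF assms(4)] unfolding C_def component_def by blast
  have fin: "finite C"
    by (rule finite_subset[OF Cg]) (simp add: grid_def finite_subset[of _ "{..r} \<times> {..s}"] subset_iff)
  have top: "(r,s) \<in> C" unfolding C_def component_def by simp
  define a where "a = Min (fst ` C)"
  define b where "b = Min (snd ` C)"
  have aC: "a \<in> fst ` C" unfolding a_def using fin top by (intro Min_in) auto
  have bC: "b \<in> snd ` C" unfolding b_def using fin top by (intro Min_in) auto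
  have ale: "\<And>w. w \<in> C \<Longrightarrow> a \<le> fst w" unfolding a_def using fin by simp
  have ble: "\<And>w. w \<in> C \<Longrightarrow> b \<le> snd w" unfolding b_def using fin by simp
  obtain j where u: "(a,j) \<in> C" using aC by force
  obtain i where w: "(i,b) \<in> C" using bC by force
  have "?R\<^sup>*\<^sup>* (r,s) (a,j)" using u unfolding C_def component_def by simp
  moreover have wg: "(i,b) \<in> grid r s" using w Cg by blast
  ultimately have "?R\<^sup>*\<^sup>* (mn (i,b) (r,s)) (mn (i,b) (a,j))"
    using restr_path[OF assms(4)] by blast
  moreover have "mn (i,b) (r,s) = (i,b)" using wg by (simp add: mn_def grid_def)
  moreover have "mn (i,b) (a,j) = (a,b)" using ale[OF w] ble[OF u] by (simp add: mn_def)
  moreover have "?R\<^sup>*\<^sup>* (r,s) (i,b)" using w unfolding C_def component_def by simp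
  ultimately have ab: "?R\<^sup>*\<^sup>* (r,s) (a,b)" by (metis (no_types, lifting) rtranclp_trans)
  have abg: "(a,b) \<in> grid r s" using ab path_grid[OF assms(4)] by blast
  have "C = {(i, j). a \<le> i \<and> i \<le> r \<and> b \<le> j \<and> j \<le> s}"
  proof (intro equalityI subsetI)
    fix x assume x: "x \<in> C"
    then show "x \<in> {(i, j). a \<le> i \<and> i \<le> r \<and> b \<le> j \<and> j \<le> s}"
      using ale[OF x] ble[OF x] Cg by (auto simp: grid_def)
  next
    fix x assume x: "x \<in> {(i, j). a \<le> i \<and> i \<le> r \<and> b \<le> j \<and> j \<le> s}"
    then have xg: "x \<in> grid r s" by (auto simp: grid_def)
    have "?R\<^sup>*\<^sup>* (mn x (r,s)) (mn x (a,b))" using restr_path[OF assms(4) xg ab] .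
    moreover have "mn x (r,s) = x" using xg by (auto simp: mn_def grid_def)
    moreover have "mn x (a,b) = (a,b)" using x by (auto simp: mn_def)
    ultimately have "?R\<^sup>*\<^sup>* x (a,b)" by simp
    then have "?R\<^sup>*\<^sup>* (a,b) x"
      by (induction rule: rtranclp_induct) (auto intro: rtranclp.rtrancl_into_rtrancl converse_rtranclp_into_rtranclp)
    then show "x \<in> C" using ab unfolding C_def component_def by (auto intro: rtranclp_trans)
  qed
  then show ?thesis using abg unfolding C_def grid_def by blast
qed

end
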